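(* Let $n\ge1$, let $\mathcal S$ be a subset of $\{E_{ij}:1\le i,j\le n\}$ and $A\in\mathfrak{gl}(n)$. Let $\mathcal G_{\mathcal S}$ be the digraph on $\{1,\dots,n\}$ with arc $(i,j)$ iff $E_{ij}\in\mathcal S$, and $\mathcal G_A$ the digraph on $\{1,\dots,n\}$ with arc $(i,j)$ iff $A_{ij}\ne0$ (arcs $(i,i)$ being self-loops). Suppose (i) each weakly connected component of $\mathcal G_{\mathcal S}$ is strongly connected with at least two nodes; (ii) $\mathcal G_{\mathcal S}$ has at least one self-loop; (iii) the union digraph $\mathcal G_A\cup\mathcal G_{\mathcal S}$ is strongly connected. Then the real Lie algebra generated by $\{A\}\cup\mathcal S$ equals $\mathfrak{gl}(n)$.
   Context: $E_{ij}$ is the $n\times n$ matrix with $(i,j)$ entry $1$ and others $0$; $\mathfrak{gl}(n)$ is the Lie algebra of real $n\times n$ matrices with bracket $[X,Y]=XY-YX$. A weakly connected component of a digraph is a connected component when directions are ignored; strongly connected means all pairs of nodes are mutually reachable via directed paths; the union digraph has the union of arc sets. *)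

theory Defs
  imports "HOL-Analysis.Analysis"
begin

definition matE :: "'n::finite \<Rightarrow> 'n \<Rightarrow> real^'n^'n" where
  "matE i j = (\<chi> a b. if a = i \<and> b = j then 1 else 0)"

definition lie_bracket :: "real^'n::finite^'n \<Rightarrow> real^'n^'n \<Rightarrow> real^'n^'n" where
  "lie_bracket X Y = X ** Y - Y ** X"

definition lie_generated :: "(real^'n::finite^'n) set \<Rightarrow> (real^'n^'n) set" where
  "lie_generated X = \<Inter>{L. subspace L \<and> X \<subseteq> L \<and>
      (\<forall>x\<in>L. \<forall>y\<in>L. lie_bracket x y \<in> L)}"

definition digraph_of_set :: "(real^'n::finite^'n) set \<Rightarrow> ('n \<times> 'n) set" where
  "digraph_of_set S = {(i,j). matE i j \<in> S}"

definition digraph_of_matrix :: "real^'n::finite^'n \<Rightarrow> ('n \<times> 'n) set" where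
  "digraph_of_matrix A = {(i,j). A $ i $ j \<noteq> 0}"

definition weak_component :: "('n \<times> 'n) set \<Rightarrow> 'n \<Rightarrow> 'n set" where
  "weak_component R v = {w. (v, w) \<in> (R \<union> R\<inverse>)\<^sup>*}"

definition strongly_connected_on :: "('n \<times> 'n) set \<Rightarrow> 'n set \<Rightarrow> bool" where
  "strongly_connected_on R V = (\<forall>u\<in>V. \<forall>w\<in>V. (u, w) \<in> R\<^sup>* \<and> (w, u) \<in> R\<^sup>*)"

definition strongly_connected :: "('n \<times> 'n) set \<Rightarrow> bool" where
  "strongly_connected R = strongly_connected_on R UNIV"

end

theory Submission
  imports Defs
begin

lemma matE_left[simp]: "(matE a b ** X) $ i $ j = (if i = a then X $ b $ j else 0)"
  by (cases "i = a") (simp_all add: matrix_matrix_mult_def matE_def if_distrib[of "\<lambda>u. u * _"] cong: if_cong)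

lemma matE_right[simp]: "(X ** matE a b) $ i $ j = (if j = b then X $ i $ a else 0)"
  by (cases "j = b") (simp_all add: matrix_matrix_mult_def matE_def if_distrib[of "\<lambda>u. _ * u"] cong: if_cong)

lemma matE_entry[simp]: "matE a b $ i $ j = (if i = a \<and> j = b then 1 else 0)"
  by (simp add: matE_def)

lemma lb_entry[simp]: "lie_bracket X Y $ i $ j = (X ** Y) $ i $ j - (Y ** X) $ i $ j"
  by (simp add: lie_bracket_def)

lemma id_trans: "p \<noteq> r \<Longrightarrow> lie_bracket (matE p q) (matE q r) = matE p r"
  by (auto simp: vec_eq_iff)

lemma id_diag: "p \<noteq> q \<Longrightarrow> lie_bracket (matE p q) (matE q p) = matE p p - matE q q"
  by (auto simp: vec_eq_iff)

lemma id_fwd: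
  assumes "x \<noteq> y" "y \<noteq> p" "s \<noteq> p"
  shows "lie_bracket (lie_bracket (matE p p) (lie_bracket A (matE p x)) +
     lie_bracket (matE p p) (lie_bracket (matE p p) (lie_bracket A (matE p x)))) (matE y s)
   = (-2 * A $ x $ y) *\<^sub>R matE p s"
  using assms by (auto simp: vec_eq_iff)

lemma id_bwd:
  assumes "x \<noteq> y" "y \<noteq> p" "s \<noteq> p"
  shows "lie_bracket (matE s y) (lie_bracket (matE p p) (lie_bracket (matE p p) (lie_bracket A (matE x p)))
     - lie_bracket (matE p p) (lie_bracket A (matE x p)))
   = (2 * A $ y $ x) *\<^sub>R matE s p"
  using assms by (auto simp: vec_eq_iff)

lemma decomp: "(X::real^'n::finite^'n) = (\<Sum>i\<in>UNIV. \<Sum>j\<in>UNIV. X $ i $ j *\<^sub>R matE i j)"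
proof -
  have "\<And>i k. (\<Sum>x\<in>UNIV. \<Sum>xa\<in>UNIV. if i = x \<and> k = xa then X $ x $ xa else 0) = X $ i $ k"
  proof -
    fix i k
    have "\<And>x. (\<Sum>xa\<in>UNIV. if i = x \<and> k = xa then X $ x $ xa else 0) = (if i = x then X $ x $ k else 0)"
      by (cases "i = x") auto
    then show "(\<Sum>x\<in>UNIV. \<Sum>xa\<in>UNIV. if i = x \<and> k = xa then X $ x $ xa else 0) = X $ i $ k"
      by simp
  qed
  then show ?thesis by (simp add: vec_eq_iff if_distrib cong: if_cong)
qed

lemma lg_subspace: "subspace (lie_generated X)"
  unfolding lie_generated_def by (rule subspace_Inter) auto
lemma lg_gen: "X \<subseteq> lie_generated X"
  unfolding lie_generated_def by auto
lemma lg_br: "x \<in> lie_generated X \<Longrightarrow> y \<in> lie_generated X \<Longrightarrow> lie_bracket x y \<in> lie_generated X"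
  unfolding lie_generated_def by auto

lemma rt_lemma:
  assumes "(u, w) \<in> (digraph_of_set S)\<^sup>*"
  shows "u = w \<or> matE u w \<in> lie_generated ({A} \<union> S)"
  using assms
proof (induction rule: rtrancl_induct)
  case base then show ?case by simp
next
  case (step v w)
  have vw: "matE v w \<in> lie_generated ({A} \<union> S)"
    using step(2) lg_gen[of "{A} \<union> S"] by (auto simp: digraph_of_set_def)
  show ?case
  proof (cases "u = w")
    case False
    show ?thesis
    proof (cases "u = v")
      case True then show ?thesis using vw by simp
    next
      case False
      then have "matE u v \<in> lie_generated ({A} \<union> S)" using step(3) by simp
      then have "lie_bracket (matE u v) (matE v w) \<in> lie_generated ({A} \<union> S)"
        using vw lg_br by blast
      then show ?thesis using id_trans[OF \<open>u \<noteq> w\<close>] by simp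
    qed
  qed simp
qed

theorem lemma8:
  fixes S :: "(real^'n::finite^'n) set" and A :: "real^'n^'n"
  assumes "S \<subseteq> {matE i j | i j. True}"
    and "\<forall>v. strongly_connected_on (digraph_of_set S) (weak_component (digraph_of_set S) v)
             \<and> card (weak_component (digraph_of_set S) v) \<ge> 2"
    and "\<exists>i. (i, i) \<in> digraph_of_set S"
    and "strongly_connected (digraph_of_matrix A \<union> digraph_of_set S)"
  shows "lie_generated ({A} \<union> S) = UNIV"
proof -
  define L where "L = lie_generated ({A} \<union> S)"
  define R where "R = digraph_of_set S"
  define G where "G = digraph_of_matrix A \<union> R"
  have sub: "subspace L" unfolding L_def by (rule lg_subspace)
  have br: "\<And>x y. x \<in> L \<Longrightarrow> y \<in> L \<Longrightarrow> lie_bracket x y \<in> L"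
    unfolding L_def by (rule lg_br)
  have AL: "A \<in> L" unfolding L_def using lg_gen by blast
  have SL: "\<And>u w. (u, w) \<in> R \<Longrightarrow> matE u w \<in> L"
    unfolding L_def R_def using lg_gen[of "{A} \<union> S"] by (auto simp: digraph_of_set_def)
  have tr: "\<And>p q r. p \<noteq> r \<Longrightarrow> matE p q \<in> L \<Longrightarrow> matE q r \<in> L \<Longrightarrow> matE p r \<in> L"
    using br id_trans by metis
  obtain i0 where i0: "matE i0 i0 \<in> L" using assms(3) SL unfolding R_def by blast
  have comp: "\<exists>s. s \<noteq> y \<and> matE y s \<in> L \<and> matE s y \<in> L" for y
  proof -
    let ?C = "weak_component R y"
    have c2: "card ?C \<ge> 2" and sc: "strongly_connected_on R ?C"
      using assms(2) unfolding R_def by auto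
    have yC: "y \<in> ?C" unfolding weak_component_def by simp
    have "\<exists>s\<in>?C. s \<noteq> y"
    proof (rule ccontr)
      assume "\<not> ?thesis"
      then have "?C \<subseteq> {y}" by auto
      then have "card ?C \<le> 1" using card_mono[of "{y}" ?C] by simp
      then show False using c2 by simp
    qed
    then obtain s where sC: "s \<in> ?C" and sy: "s \<noteq> y" by blast
    have "(y, s) \<in> R\<^sup>*" "(s, y) \<in> R\<^sup>*" using sc yC sC unfolding strongly_connected_on_def by auto
    then have "matE y s \<in> L" "matE s y \<in> L"
      using rt_lemma sy unfolding L_def R_def by metis+
    then show ?thesis using sy by blast
  qed
  have fwd: "matE i0 y \<in> L" if "(i0, y) \<in> G\<^sup>*" for y
    using that
  proof (induction rule: rtrancl_induct)
    case base then show ?case using i0 .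
  next
    case (step x y)
    show ?case
    proof (cases "y = i0 \<or> x = y")
      case True then show ?thesis using i0 step by auto
    next
      case False
      then have yi: "y \<noteq> i0" and xy: "x \<noteq> y" by auto
      show ?thesis
      proof (cases "(x, y) \<in> R")
        case True
        then have xyL: "matE x y \<in> L" by (rule SL)
        show ?thesis
        proof (cases "x = i0")
          case True then show ?thesis using xyL by simp
        next
          case False then show ?thesis using tr[of i0 y x] step(3) xyL yi by blast
        qed
      next
        case False
        then have Axy: "A $ x $ y \<noteq> 0" using step(2) unfolding G_def digraph_of_matrix_def by auto
        obtain s where s: "s \<noteq> y" "matE y s \<in> L" "matE s y \<in> L" using comp by blast
        show ?thesis
        proof (cases "s = i0")
          case True then show ?thesis using s by simp
        next
          case False
          let ?X = "lie_bracket A (matE i0 x)"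
          have "lie_bracket (lie_bracket (matE i0 i0) ?X +
             lie_bracket (matE i0 i0) (lie_bracket (matE i0 i0) ?X)) (matE y s) \<in> L"
            using br i0 AL step(3) s(2) subspace_add[OF sub] by metis
          then have "(-2 * A $ x $ y) *\<^sub>R matE i0 s \<in> L"
            using id_fwd[OF xy yi False] by simp
          then have "inverse (-2 * A $ x $ y) *\<^sub>R ((-2 * A $ x $ y) *\<^sub>R matE i0 s) \<in> L"
            using sub subspace_mul by blast
          then have "matE i0 s \<in> L" using Axy by simp
          then show ?thesis using tr s yi by metis
        qed
      qed
    qed
  qed
  have bwd: "matE y i0 \<in> L" if "(y, i0) \<in> G\<^sup>*" for y
    using that
  proof (induction rule: converse_rtrancl_induct)
    case base then show ?case using i0 .
  next
    case (step y x)
    show ?case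
    proof (cases "y = i0 \<or> x = y")
      case True then show ?thesis using i0 step by auto
    next
      case False
      then have yi: "y \<noteq> i0" and xy: "x \<noteq> y" by auto
      show ?thesis
      proof (cases "(y, x) \<in> R")
        case True
        then have xyL: "matE y x \<in> L" by (rule SL)
        show ?thesis
        proof (cases "x = i0")
          case True then show ?thesis using xyL by simp
        next
          case False then show ?thesis using tr[of y i0 x] step(3) xyL yi by blast
        qed
      next
        case False
        then have Ayx: "A $ y $ x \<noteq> 0" using step(1) unfolding G_def digraph_of_matrix_def by auto
        obtain s where s: "s \<noteq> y" "matE y s \<in> L" "matE s y \<in> L" using comp by blast
        show ?thesis
        proof (cases "s = i0")
          case True then show ?thesis using s by simp
        next
          case False
          let ?X = "lie_bracket A (matE x i0)"
          have "lie_bracket (matE s y) (lie_bracket (matE i0 i0) (lie_bracket (matE i0 i0) ?X)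
             - lie_bracket (matE i0 i0) ?X) \<in> L"
            using br i0 AL step(3) s(3) subspace_diff[OF sub] by metis
          then have "(2 * A $ y $ x) *\<^sub>R matE s i0 \<in> L"
            using id_bwd[OF xy yi False] by simp
          then have "inverse (2 * A $ y $ x) *\<^sub>R ((2 * A $ y $ x) *\<^sub>R matE s i0) \<in> L"
            using sub subspace_mul by blast
          then have "matE s i0 \<in> L" using Ayx by simp
          then show ?thesis using tr s yi by metis
        qed
      qed
    qed
  qed
  have allE: "matE u w \<in> L" for u w
  proof -
    have G: "(a, b) \<in> G\<^sup>*" for a b
      using assms(4) unfolding G_def R_def strongly_connected_def strongly_connected_on_def by blast
    have F: "matE i0 v \<in> L" "matE v i0 \<in> L" for v using fwd bwd G by auto
    show ?thesis
    proof (cases "u = w")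
      case False
      show ?thesis
      proof (cases "u = i0")
        case True then show ?thesis using F by simp
      next
        case ui: False
        show ?thesis
        proof (cases "w = i0")
          case True then show ?thesis using F by simp
        next
          case wi: False
          show ?thesis using tr[of u w i0] F False by blast
        qed
      qed
    next
      case True
      show ?thesis
      proof (cases "u = i0")
        case False
        have "matE i0 i0 - lie_bracket (matE i0 u) (matE u i0) \<in> L"
          using br F i0 subspace_diff[OF sub] by metis
        then show ?thesis using id_diag[of i0 u] False True by simp
      qed (use i0 True in simp)
    qed
  qed
  have "X \<in> L" for X
  proof -
    have "(\<Sum>i\<in>UNIV. \<Sum>j\<in>UNIV. X $ i $ j *\<^sub>R matE i j) \<in> L"
      using allE sub by (intro subspace_sum[OF sub] subspace_sum) (auto simp: subspace_mul)
    then show ?thesis using decomp[of X] by simp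
  qed
  then show ?thesis unfolding L_def by auto
qed

end
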